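(* Let $L$ be a finite lattice. If $L$ is shellable, then its facet adjacency graph $FA(L)$ does not have two disjoint source sets.
   Context: The order complex of $L$ has the chains of $L$ as faces; $L$ is shellable if its facets (maximal chains) admit a linear order $F_1,\dots,F_k$ such that for each $j<k$, $\big(\bigcup_{i\le j}\langle F_i\rangle\big)\cap\langle F_{j+1}\rangle$ is pure of dimension $|F_{j+1}|-2$, with $\langle F\rangle$ the set of subsets of $F$. The facet adjacency graph $FA(L)$ is the directed graph whose vertices are the maximal chains of $L$, with an edge $F\to G$ whenever $|F\cap G|=|G|-1$. A source set of a directed graph with vertex set $V$ is a nonempty proper subset $X\subsetneq V$ such that there is no edge $y\to x$ with $y\notin X$ and $x\in X$. *)

theory Defs
  imports Main
begin

text \<open>Chains of a (finite) lattice, given as a type of class lattice + finite;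
  the faces of the order complex are the chains.\<close>

definition is_chain :: "'a::order set \<Rightarrow> bool" where
  "is_chain C \<longleftrightarrow> (\<forall>x\<in>C. \<forall>y\<in>C. x \<le> y \<or> y \<le> x)"

text \<open>Facets of the order complex = maximal chains.\<close>
definition maximal_chains :: "'a::order set set" where
  "maximal_chains = {C. is_chain C \<and> (\<forall>D. is_chain D \<and> C \<subseteq> D \<longrightarrow> D = C)}"

definition pure_of_dim :: "'b set set \<Rightarrow> int \<Rightarrow> bool" where
  "pure_of_dim \<Delta> d \<longleftrightarrow>
     (\<forall>G\<in>\<Delta>. (\<forall>H\<in>\<Delta>. G \<subseteq> H \<longrightarrow> H = G) \<longrightarrow> int (card G) - 1 = d)"

text \<open>Shellability of the order complex: a linear order F_1,...,F_k (list, 0-indexed)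
  of all facets such that for each j < k, (\<Union>_{i\<le>j} <F_i>) \<inter> <F_{j+1}> is pure of
  dimension |F_{j+1}| - 2.\<close>
definition shellable :: "'a::{finite,lattice} itself \<Rightarrow> bool" where
  "shellable _ \<longleftrightarrow> (\<exists>Fs :: 'a set list.
      distinct Fs \<and> set Fs = maximal_chains \<and>
      (\<forall>j. Suc j < length Fs \<longrightarrow>
         pure_of_dim ((\<Union>i\<le>j. Pow (Fs ! i)) \<inter> Pow (Fs ! Suc j))
                     (int (card (Fs ! Suc j)) - 2)))"

definition FA_edges :: "('a::{finite,lattice} set \<times> 'a set) set" where
  "FA_edges = {(F, G). F \<in> maximal_chains \<and> G \<in> maximal_chains \<and>
                        int (card (F \<inter> G)) = int (card G) - 1}"

definition is_source_set :: "'v set \<Rightarrow> ('v \<times> 'v) set \<Rightarrow> 'v set \<Rightarrow> bool" where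
  "is_source_set V E X \<longleftrightarrow> X \<noteq> {} \<and> X \<subset> V \<and>
     \<not> (\<exists>y x. (y, x) \<in> E \<and> y \<notin> X \<and> x \<in> X)"

end

theory Submission
  imports Defs
begin

lemma key_edge:
  fixes Fs :: "'a::{finite,lattice} set list"
  assumes setF: "set Fs = maximal_chains"
    and pure: "pure_of_dim ((\<Union>i\<le>j. Pow (Fs ! i)) \<inter> Pow (Fs ! Suc j))
                     (int (card (Fs ! Suc j)) - 2)"
    and len: "Suc j < length Fs"
  shows "\<exists>i\<le>j. (Fs ! i, Fs ! Suc j) \<in> FA_edges"
proof -
  define D where "D = (\<Union>i\<le>j. Pow (Fs ! i)) \<inter> Pow (Fs ! Suc j)"
  have fin: "finite D" by (rule finite)
  have ne: "D \<noteq> {}" unfolding D_def by blast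
  obtain G where G: "G \<in> D" and Gmax: "\<forall>H\<in>D. G \<subseteq> H \<longrightarrow> H = G"
    using finite_has_maximal[OF fin ne] by blast
  have pD: "pure_of_dim D (int (card (Fs ! Suc j)) - 2)" using pure unfolding D_def .
  have cG: "int (card G) - 1 = int (card (Fs ! Suc j)) - 2"
    using pD G Gmax unfolding pure_of_dim_def by blast
  from G obtain i where i: "i \<le> j" "G \<subseteq> Fs ! i" "G \<subseteq> Fs ! Suc j"
    unfolding D_def by blast
  have inD: "Fs ! i \<inter> Fs ! Suc j \<in> D" unfolding D_def using i(1) by blast
  have sub: "G \<subseteq> Fs ! i \<inter> Fs ! Suc j" using i(2,3) by (rule Int_greatest)
  have eq: "Fs ! i \<inter> Fs ! Suc j = G" using Gmax[rule_format, OF inD sub] .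
  have il: "i < length Fs" using len i(1) by simp
  have m1: "Fs ! i \<in> maximal_chains" using setF nth_mem[OF il] by simp
  have m2: "Fs ! Suc j \<in> maximal_chains" using setF nth_mem[OF len] by simp
  have "(Fs ! i, Fs ! Suc j) \<in> FA_edges" unfolding FA_edges_def using m1 m2 eq cG by simp
  then show ?thesis using i(1) by blast
qed
lemma source_contains_first:
  fixes Fs :: "'a::{finite,lattice} set list"
  assumes setF: "set Fs = maximal_chains"
    and sh: "\<forall>j. Suc j < length Fs \<longrightarrow>
         pure_of_dim ((\<Union>i\<le>j. Pow (Fs ! i)) \<inter> Pow (Fs ! Suc j))
                     (int (card (Fs ! Suc j)) - 2)"
    and X: "is_source_set (maximal_chains :: 'a set set) FA_edges X"
  shows "Fs ! 0 \<in> X"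
proof -
  from X obtain x where x: "x \<in> X" "X \<subseteq> maximal_chains"
    unfolding is_source_set_def by auto
  then have "x \<in> set Fs" using setF by auto
  then obtain k where k: "k < length Fs" "Fs ! k = x" by (metis in_set_conv_nth)
  define P where "P = (\<lambda>k. k < length Fs \<and> Fs ! k \<in> X)"
  have Pk: "P k" using k x unfolding P_def by auto
  define m where "m = (LEAST k. P k)"
  have Pm: "P m" using Pk unfolding m_def by (rule LeastI)
  have least: "\<And>i. i < m \<Longrightarrow> \<not> P i" unfolding m_def using not_less_Least by blast
  show ?thesis
  proof (cases m)
    case 0 then show ?thesis using Pm unfolding P_def by simp
  next
    case (Suc j)
    then have len: "Suc j < length Fs" using Pm unfolding P_def by simp
    obtain i where i: "i \<le> j" "(Fs ! i, Fs ! Suc j) \<in> FA_edges"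
      using key_edge[OF setF sh[rule_format, OF len] len] by blast
    have "Fs ! Suc j \<in> X" using Pm Suc unfolding P_def by simp
    then have "Fs ! i \<in> X" using X i(2) unfolding is_source_set_def by blast
    then have "P i" unfolding P_def using i(1) len by simp
    then show ?thesis using least[of i] i(1) Suc by simp
  qed
qed

theorem lemma3p30:
  assumes "shellable TYPE('a::{finite,lattice})"
  shows "\<not> (\<exists>X Y. is_source_set (maximal_chains :: 'a set set) FA_edges X \<and>
                  is_source_set (maximal_chains :: 'a set set) FA_edges Y \<and> X \<inter> Y = {})"
proof
  assume "\<exists>X Y. is_source_set (maximal_chains :: 'a set set) FA_edges X \<and>
                  is_source_set (maximal_chains :: 'a set set) FA_edges Y \<and> X \<inter> Y = {}"
  then obtain X Y where XY: "is_source_set (maximal_chains :: 'a set set) FA_edges X"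
    "is_source_set (maximal_chains :: 'a set set) FA_edges Y" "X \<inter> Y = {}" by blast
  from assms obtain Fs :: "'a set list" where F: "set Fs = maximal_chains"
    "\<forall>j. Suc j < length Fs \<longrightarrow>
         pure_of_dim ((\<Union>i\<le>j. Pow (Fs ! i)) \<inter> Pow (Fs ! Suc j))
                     (int (card (Fs ! Suc j)) - 2)"
    unfolding shellable_def by blast
  have "Fs ! 0 \<in> X" by (rule source_contains_first[OF F XY(1)])
  moreover have "Fs ! 0 \<in> Y" by (rule source_contains_first[OF F XY(2)])
  ultimately show False using XY(3) by blast
qed

end
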